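(* Let $N\ge1$. There is a constant $C>0$ such that for every $f\in L^\infty(0,1;\mathbb{R}^N)$ there exists a sequence $(f^k)_{k\ge1}\subset\mathcal{F}^N_{(0,1)}$ with $$\lim_{k\to\infty}\int_0^1 f^k(t)\cdot h(t)\,dt=\int_0^1 f(t)\cdot h(t)\,dt\quad\forall h\in L^1(0,1;\mathbb{R}^N),$$ and $\|f^k\|_{L^\infty(0,1;\mathbb{R}^N)}\le C\|f\|_{L^\infty(0,1;\mathbb{R}^N)}$ for all $k$. In particular $\mathcal{F}^N_{(0,1)}$ is weak-$*$ dense in $L^\infty(0,1;\mathbb{R}^N)$.
   Context: $\mathcal{F}^N_{(a,b)}\subset L^\infty(a,b;\mathbb{R}^N)$ is the set of piecewise constant functions with at most one nonzero component on each piece: $f\in\mathcal{F}^N_{(a,b)}$ iff there exist $p\in\mathbb{N}$, indices $i_1,\dots,i_p\in\{1,\dots,N\}$, constants $c_1,\dots,c_p\in\mathbb{R}$ and $a=t_0<t_1<\cdots<t_p=b$ with $f(t)=c_l e_{i_l}$ for $t\in(t_{l-1},t_l)$, $l=1,\dots,p$, where $e_1,\dots,e_N$ is the standard basis of $\mathbb{R}^N$. *)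

theory Defs
  imports "HOL-Analysis.Analysis" "HOL-Probability.Essential_Supremum"
begin

text \<open>Functions on (0,1) with values in R^N, N = CARD('n); measure: Lebesgue on [0,1].\<close>

definition Linf_norm :: "(real \<Rightarrow> real ^ 'n) \<Rightarrow> ereal" where
  "Linf_norm f = esssup (lebesgue_on {0..1}) (\<lambda>t. ereal (norm (f t)))"

definition Linf :: "(real \<Rightarrow> real ^ 'n) set" where
  "Linf = {f. f \<in> borel_measurable (lebesgue_on {0..1}) \<and> Linf_norm f < \<infinity>}"

definition L1 :: "(real \<Rightarrow> real ^ 'n) set" where
  "L1 = {h. integrable (lebesgue_on {0..1}) h}"

definition F_N :: "real \<Rightarrow> real \<Rightarrow> (real \<Rightarrow> real ^ 'n) set" where
  "F_N a b = {f. \<exists>(p::nat) (i::nat \<Rightarrow> 'n) (c::nat \<Rightarrow> real) (t::nat \<Rightarrow> real).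
      1 \<le> p \<and> t 0 = a \<and> t p = b \<and> (\<forall>l<p. t l < t (Suc l)) \<and>
      (\<forall>l\<in>{1..p}. \<forall>s\<in>{t (l - 1)<..<t l}. f s = c l *\<^sub>R axis (i l) 1)}"

end

theory Submission
  imports Defs
begin

abbreviation M01 :: "real measure" where "M01 \<equiv> lebesgue_on {0..1::real}"

lemma fm01: "finite_measure M01"
  by (rule finite_measure_lebesgue_on) auto

lemma sets01: "S \<subseteq> {0..1} \<Longrightarrow> S \<in> sets lebesgue \<Longrightarrow> S \<in> sets M01"
  by (simp add: sets_restrict_space_iff)

lemma integral_ind01:
  assumes "S \<subseteq> {0..1}" "S \<in> sets lebesgue"
  shows "integral\<^sup>L M01 (indicator S) = measure lebesgue S"
proof -
  have "integral\<^sup>L M01 (indicator S) = measure M01 (S \<inter> space M01)"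
    by (rule Bochner_Integration.integral_indicator)
  also have "S \<inter> space M01 = S" using assms by auto
  also have "measure M01 S = measure lebesgue S"
    using assms by (intro measure_restrict_space) auto
  finally show ?thesis .
qed

lemma int_bdd_prod:
  fixes D q :: "real \<Rightarrow> 'b::euclidean_space"
  assumes "D \<in> borel_measurable M01" "AE t in M01. norm (D t) \<le> K" "integrable M01 q"
  shows "integrable M01 (\<lambda>t. D t \<bullet> q t)"
proof (rule Bochner_Integration.integrable_bound[of _ "\<lambda>t. K * norm (q t)"])
  show "integrable M01 (\<lambda>t. K * norm (q t))" using assms(3) by auto
  show "(\<lambda>t. D t \<bullet> q t) \<in> borel_measurable M01"
    using assms(1,3) borel_measurable_integrable by measurable
  show "AE t in M01. norm (D t \<bullet> q t) \<le> norm (K * norm (q t))"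
    using assms(2)
  proof eventually_elim
    case (elim t)
    have "norm (D t \<bullet> q t) \<le> norm (D t) * norm (q t)" by (simp add: Cauchy_Schwarz_ineq2)
    also have "\<dots> \<le> K * norm (q t)" using elim by (simp add: mult_right_mono)
    also have "\<dots> \<le> norm (K * norm (q t))" by simp
    finally show ?case .
  qed
qed

lemma int_bdd_est:
  fixes D q :: "real \<Rightarrow> 'b::euclidean_space"
  assumes "D \<in> borel_measurable M01" "AE t in M01. norm (D t) \<le> K" "integrable M01 q"
  shows "\<bar>integral\<^sup>L M01 (\<lambda>t. D t \<bullet> q t)\<bar> \<le> K * integral\<^sup>L M01 (\<lambda>t. norm (q t))"
proof -
  have i: "integrable M01 (\<lambda>t. D t \<bullet> q t)" by (rule int_bdd_prod[OF assms])
  have "\<bar>integral\<^sup>L M01 (\<lambda>t. D t \<bullet> q t)\<bar> \<le> integral\<^sup>L M01 (\<lambda>t. norm (D t \<bullet> q t))"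
    using integral_norm_bound[of M01 "\<lambda>t. D t \<bullet> q t"] by simp
  also have "\<dots> \<le> integral\<^sup>L M01 (\<lambda>t. K * norm (q t))"
  proof (rule integral_mono_AE)
    show "integrable M01 (\<lambda>t. norm (D t \<bullet> q t))" using i by auto
    show "integrable M01 (\<lambda>t. K * norm (q t))" using assms(3) by auto
    show "AE t in M01. norm (D t \<bullet> q t) \<le> K * norm (q t)"
      using assms(2)
    proof eventually_elim
      case (elim t)
      have "norm (D t \<bullet> q t) \<le> norm (D t) * norm (q t)" by (simp add: Cauchy_Schwarz_ineq2)
      also have "\<dots> \<le> K * norm (q t)" using elim by (simp add: mult_right_mono)
      finally show ?case .
    qed
  qed
  also have "\<dots> = K * integral\<^sup>L M01 (\<lambda>t. norm (q t))" by simp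
  finally show ?thesis .
qed

lemma cont_integrable:
  fixes g :: "real \<Rightarrow> 'b::euclidean_space"
  assumes "continuous_on UNIV g"
  shows "integrable M01 g"
proof -
  have c: "continuous_on {0..1} g" using assms continuous_on_subset by blast
  have "compact (g ` {0..1})" by (rule compact_continuous_image[OF c]) auto
  then obtain B where B: "\<And>x. x \<in> {0..1} \<Longrightarrow> norm (g x) \<le> B"
    using compact_imp_bounded bounded_iff by (metis image_eqI)
  show ?thesis
  proof (rule finite_measure.integrable_const_bound[OF fm01, where B=B])
    show "AE x in M01. norm (g x) \<le> B" using B by (intro AE_I2) auto
    show "g \<in> borel_measurable M01"
      by (rule continuous_imp_measurable_on_sets_lebesgue[OF c]) auto
  qed
qed

lemma closure_lemma:
  fixes D :: "nat \<Rightarrow> real \<Rightarrow> 'b::euclidean_space"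
  assumes Dm: "\<And>k. D k \<in> borel_measurable M01"
    and Db: "\<And>k. AE t in M01. norm (D k t) \<le> K"
    and h: "integrable M01 h"
    and approx: "\<And>e. e > 0 \<Longrightarrow> \<exists>g. integrable M01 g \<and>
        (\<lambda>k. integral\<^sup>L M01 (\<lambda>t. D k t \<bullet> g t)) \<longlonglongrightarrow> 0 \<and>
        integral\<^sup>L M01 (\<lambda>t. norm (h t - g t)) < e"
  shows "(\<lambda>k. integral\<^sup>L M01 (\<lambda>t. D k t \<bullet> h t)) \<longlonglongrightarrow> 0"
proof (rule LIMSEQ_I)
  fix e :: real assume e: "0 < e"
  define K' where "K' = \<bar>K\<bar> + 1"
  have K': "K' > 0" unfolding K'_def by simp
  have Db': "AE t in M01. norm (D k t) \<le> K'" for k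
    using Db[of k] by eventually_elim (auto simp: K'_def)
  obtain g where g: "integrable M01 g"
    "(\<lambda>k. integral\<^sup>L M01 (\<lambda>t. D k t \<bullet> g t)) \<longlonglongrightarrow> 0"
    "integral\<^sup>L M01 (\<lambda>t. norm (h t - g t)) < e / (2 * K')"
    using approx[of "e / (2 * K')"] e K' by auto
  obtain N0 where N0: "\<And>k. k \<ge> N0 \<Longrightarrow> norm (integral\<^sup>L M01 (\<lambda>t. D k t \<bullet> g t) - 0) < e / 2"
    using LIMSEQ_D[OF g(2), of "e/2"] e by auto
  show "\<exists>no. \<forall>k\<ge>no. norm (integral\<^sup>L M01 (\<lambda>t. D k t \<bullet> h t) - 0) < e"
  proof (intro exI allI impI)
    fix k assume k: "N0 \<le> k"
    have hg: "integrable M01 (\<lambda>t. h t - g t)" using h g(1) by auto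
    have i1: "integrable M01 (\<lambda>t. D k t \<bullet> g t)" by (rule int_bdd_prod[OF Dm Db' g(1)])
    have i2: "integrable M01 (\<lambda>t. D k t \<bullet> (h t - g t))" by (rule int_bdd_prod[OF Dm Db' hg])
    have eq: "integral\<^sup>L M01 (\<lambda>t. D k t \<bullet> h t) =
        integral\<^sup>L M01 (\<lambda>t. D k t \<bullet> g t) + integral\<^sup>L M01 (\<lambda>t. D k t \<bullet> (h t - g t))"
    proof -
      have "integral\<^sup>L M01 (\<lambda>t. D k t \<bullet> g t) + integral\<^sup>L M01 (\<lambda>t. D k t \<bullet> (h t - g t))
          = integral\<^sup>L M01 (\<lambda>t. D k t \<bullet> g t + D k t \<bullet> (h t - g t))"
        using i1 i2 by (rule Bochner_Integration.integral_add[symmetric])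
      also have "(\<lambda>t. D k t \<bullet> g t + D k t \<bullet> (h t - g t)) = (\<lambda>t. D k t \<bullet> h t)"
        by (auto simp: inner_diff_right)
      finally show ?thesis by simp
    qed
    have b2: "\<bar>integral\<^sup>L M01 (\<lambda>t. D k t \<bullet> (h t - g t))\<bar> \<le> K' * integral\<^sup>L M01 (\<lambda>t. norm (h t - g t))"
      by (rule int_bdd_est[OF Dm Db' hg])
    also have "\<dots> < K' * (e / (2 * K'))" using g(3) K' by (intro mult_strict_left_mono) auto
    also have "\<dots> = e / 2" using K' by simp
    finally have b2': "\<bar>integral\<^sup>L M01 (\<lambda>t. D k t \<bullet> (h t - g t))\<bar> < e / 2" .
    have "\<bar>integral\<^sup>L M01 (\<lambda>t. D k t \<bullet> g t)\<bar> < e / 2" using N0[OF k] by simp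
    then show "norm (integral\<^sup>L M01 (\<lambda>t. D k t \<bullet> h t) - 0) < e"
      using b2' unfolding eq by simp
  qed
qed

lemma approx_ind:
  assumes A: "A \<in> sets M01" and e: "e > 0"
  shows "\<exists>\<phi>::real \<Rightarrow> real. continuous_on UNIV \<phi> \<and>
           integral\<^sup>L M01 (\<lambda>t. \<bar>indicator A t - \<phi> t\<bar>) < e"
proof -
  have A01: "A \<subseteq> {0..1}" and Al: "A \<in> sets lebesgue"
    using A by (auto simp: sets_restrict_space_iff)
  obtain T where T: "closed T" "T \<subseteq> A" "A - T \<in> lmeasurable" "emeasure lebesgue (A - T) < ennreal (e/2)"
    using sets_lebesgue_inner_closed[OF Al, of "e/2"] e by auto
  obtain U where U: "open U" "A \<subseteq> U" "U - A \<in> lmeasurable" "emeasure lebesgue (U - A) < ennreal (e/2)"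
    using sets_lebesgue_outer_open[OF Al, of "e/2"] e by auto
  have "closed (-U)" using U(1) by auto
  moreover have "T \<inter> -U = {}" using T(2) U(2) by auto
  ultimately obtain \<phi> :: "real \<Rightarrow> real" where phi: "continuous_on UNIV \<phi>"
    "\<And>x. \<phi> x \<in> closed_segment 1 0" "\<And>x. x \<in> T \<Longrightarrow> \<phi> x = 1" "\<And>x. x \<in> -U \<Longrightarrow> \<phi> x = 0"
    using Urysohn[OF T(1), of "-U" 1 0] by metis
  have phi01: "0 \<le> \<phi> x \<and> \<phi> x \<le> 1" for x
    using phi(2)[of x] by (auto simp: closed_segment_eq_real_ivl)
  define W where "W = (U - T) \<inter> {0..1}"
  have UT: "U - T = (U - A) \<union> (A - T)" using T(2) U(2) by auto
  have UTl: "U - T \<in> lmeasurable" unfolding UT using T(3) U(3) by auto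
  have Wl: "W \<in> sets lebesgue" unfolding W_def using UTl by auto
  have W01: "W \<subseteq> {0..1}" unfolding W_def by auto
  have WM: "W \<in> sets M01" by (rule sets01[OF W01 Wl])
  have pw: "\<bar>indicator A t - \<phi> t\<bar> \<le> indicator W t" if "t \<in> space M01" for t
  proof -
    have t01: "t \<in> {0..1}" using that by simp
    show ?thesis
    proof (cases "t \<in> T")
      case True then show ?thesis using phi(3) T(2) by (auto simp: indicator_def)
    next
      case nT: False
      show ?thesis
      proof (cases "t \<in> U")
        case True
        then have "t \<in> W" using nT t01 by (auto simp: W_def)
        then show ?thesis using phi01[of t] by (auto simp: indicator_def)
      next
        case False
        then show ?thesis using phi(4)[of t] U(2) by (auto simp: indicator_def)
      qed
    qed
  qed
  have iW: "integrable M01 (indicator W :: real \<Rightarrow> real)"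
    by (rule finite_measure.integrable_const_bound[OF fm01, where B=1]) (auto simp: WM borel_measurable_indicator)
  have iphi: "integrable M01 (\<lambda>t. \<bar>indicator A t - \<phi> t\<bar>)"
  proof (rule finite_measure.integrable_const_bound[OF fm01, where B=1])
    show "AE x in M01. norm \<bar>indicator A x - \<phi> x\<bar> \<le> (1::real)"
      using phi01 by (intro AE_I2) (auto simp: indicator_def)
    have "\<phi> \<in> borel_measurable M01"
      by (rule continuous_imp_measurable_on_sets_lebesgue) (auto intro: continuous_on_subset[OF phi(1)])
    then show "(\<lambda>x. \<bar>indicator A x - \<phi> x\<bar>) \<in> borel_measurable M01"
      using A by measurable
  qed
  have "integral\<^sup>L M01 (\<lambda>t. \<bar>indicator A t - \<phi> t\<bar>) \<le> integral\<^sup>L M01 (indicator W)"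
    by (rule integral_mono[OF iphi iW pw])
  also have "\<dots> = measure lebesgue W" by (rule integral_ind01[OF W01 Wl])
  also have "\<dots> \<le> measure lebesgue (U - T)"
    by (rule measure_mono_fmeasurable[OF _ Wl UTl]) (auto simp: W_def)
  also have "\<dots> \<le> measure lebesgue (U - A) + measure lebesgue (A - T)"
    unfolding UT using T(3) U(3) by (intro measure_Un_le) auto
  also have "\<dots> < e/2 + e/2"
  proof -
    have "measure lebesgue (U - A) < e/2"
      using U(3,4) e by (simp add: emeasure_eq_measure2 ennreal_less_iff)
    moreover have "measure lebesgue (A - T) < e/2"
      using T(3,4) e by (simp add: emeasure_eq_measure2 ennreal_less_iff)
    ultimately show ?thesis by simp
  qed
  finally show ?thesis using phi(1) by auto
qed

lemma extend_weak:
  fixes D :: "nat \<Rightarrow> real \<Rightarrow> 'b::euclidean_space"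
  assumes Dm: "\<And>k. D k \<in> borel_measurable M01"
    and Db: "\<And>k. AE t in M01. norm (D k t) \<le> K"
    and cont: "\<And>g. continuous_on UNIV g \<Longrightarrow> (\<lambda>k. integral\<^sup>L M01 (\<lambda>t. D k t \<bullet> g t)) \<longlonglongrightarrow> 0"
    and h: "integrable M01 h"
  shows "(\<lambda>k. integral\<^sup>L M01 (\<lambda>t. D k t \<bullet> h t)) \<longlonglongrightarrow> 0"
  using h
proof (induct rule: integrable_induct)
  case (base A c)
  have Am: "A \<in> sets M01" using base by simp
  show ?case
  proof (rule closure_lemma[OF Dm Db])
    show "integrable M01 (\<lambda>x. indicator A x *\<^sub>R c)"
      using Am by (intro integrable_mult_indicator) (auto intro: finite_measure.integrable_const[OF fm01])
    fix e :: real assume e: "e > 0"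
    obtain \<phi> :: "real \<Rightarrow> real" where phi: "continuous_on UNIV \<phi>"
      "integral\<^sup>L M01 (\<lambda>t. \<bar>indicator A t - \<phi> t\<bar>) < e / (norm c + 1)"
    proof -
      have "e / (norm c + 1) > 0" using e by (intro divide_pos_pos) (auto intro: add_nonneg_pos)
      then show ?thesis using approx_ind[OF Am, of "e / (norm c + 1)"] that by blast
    qed
    define g where "g = (\<lambda>t. \<phi> t *\<^sub>R c)"
    have gc: "continuous_on UNIV g" unfolding g_def by (intro continuous_intros phi(1))
    have "integral\<^sup>L M01 (\<lambda>t. norm (indicator A t *\<^sub>R c - g t))
        = integral\<^sup>L M01 (\<lambda>t. \<bar>indicator A t - \<phi> t\<bar> * norm c)"
      unfolding g_def by (simp add: scaleR_diff_left[symmetric])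
    also have "\<dots> = integral\<^sup>L M01 (\<lambda>t. \<bar>indicator A t - \<phi> t\<bar>) * norm c" by simp
    also have "\<dots> \<le> (e / (norm c + 1)) * norm c"
      using phi(2) by (intro mult_right_mono) auto
    also have "\<dots> < e"
    proof -
      have "(e / (norm c + 1)) * norm c = e * (norm c / (norm c + 1))" by simp
      also have "\<dots> < e * 1"
      proof -
        have p: "norm c + 1 > 0" using norm_ge_zero[of c] by linarith
        have "norm c / (norm c + 1) < 1" using p by (simp add: divide_less_eq)
        then show ?thesis using e by (intro mult_strict_left_mono) auto
      qed
      finally show ?thesis by simp
    qed
    finally show "\<exists>g. integrable M01 g \<and> (\<lambda>k. integral\<^sup>L M01 (\<lambda>t. D k t \<bullet> g t)) \<longlonglongrightarrow> 0 \<and>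
        integral\<^sup>L M01 (\<lambda>t. norm (indicator A t *\<^sub>R c - g t)) < e"
      using gc cont[OF gc] cont_integrable[OF gc] by blast
  qed
next
  case (add f g)
  have i1: "integrable M01 (\<lambda>t. D k t \<bullet> f t)" for k by (rule int_bdd_prod[OF Dm Db add(1)])
  have i2: "integrable M01 (\<lambda>t. D k t \<bullet> g t)" for k by (rule int_bdd_prod[OF Dm Db add(3)])
  have eq: "integral\<^sup>L M01 (\<lambda>t. D k t \<bullet> (f t + g t)) =
      integral\<^sup>L M01 (\<lambda>t. D k t \<bullet> f t) + integral\<^sup>L M01 (\<lambda>t. D k t \<bullet> g t)" for k
  proof -
    have "integral\<^sup>L M01 (\<lambda>t. D k t \<bullet> f t) + integral\<^sup>L M01 (\<lambda>t. D k t \<bullet> g t)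
        = integral\<^sup>L M01 (\<lambda>t. D k t \<bullet> f t + D k t \<bullet> g t)"
      using i1 i2 by (rule Bochner_Integration.integral_add[symmetric])
    then show ?thesis by (simp add: inner_add_right)
  qed
  show ?case unfolding eq using tendsto_add[OF add(2) add(4)] by simp
next
  case (lim f s)
  show ?case
  proof (rule closure_lemma[OF Dm Db lim(5)])
    fix e :: real assume e: "e > 0"
    have "(\<lambda>i. integral\<^sup>L M01 (\<lambda>t. norm (f t - s i t))) \<longlonglongrightarrow> integral\<^sup>L M01 (\<lambda>t. 0::real)"
    proof (rule integral_dominated_convergence[where w="\<lambda>t. 3 * norm (f t)"])
      show "(\<lambda>t. 0::real) \<in> borel_measurable M01" by simp
      show "(\<lambda>t. norm (f t - s i t)) \<in> borel_measurable M01" for i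
        using lim(1)[of i] lim(5) borel_measurable_integrable by measurable
      show "integrable M01 (\<lambda>t. 3 * norm (f t))" using lim(5) by auto
      show "AE t in M01. (\<lambda>i. norm (f t - s i t)) \<longlonglongrightarrow> 0"
      proof (rule AE_I2)
        fix t assume t: "t \<in> space M01"
        have "(\<lambda>i. f t - s i t) \<longlonglongrightarrow> f t - f t"
          by (intro tendsto_diff tendsto_const lim(3)[OF t])
        then show "(\<lambda>i. norm (f t - s i t)) \<longlonglongrightarrow> 0"
          using tendsto_norm_zero by fastforce
      qed
      show "AE t in M01. norm (norm (f t - s i t)) \<le> 3 * norm (f t)" for i
      proof (rule AE_I2)
        fix t assume t: "t \<in> space M01"
        have "norm (f t - s i t) \<le> norm (f t) + norm (s i t)" by (rule norm_triangle_ineq4)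
        then show "norm (norm (f t - s i t)) \<le> 3 * norm (f t)" using lim(4)[OF t, of i] by simp
      qed
    qed
    then obtain i where i: "integral\<^sup>L M01 (\<lambda>t. norm (f t - s i t)) < e"
      using LIMSEQ_D[of _ 0 e] e by fastforce
    show "\<exists>g. integrable M01 g \<and> (\<lambda>k. integral\<^sup>L M01 (\<lambda>t. D k t \<bullet> g t)) \<longlonglongrightarrow> 0 \<and>
        integral\<^sup>L M01 (\<lambda>t. norm (f t - g t)) < e"
      using lim(1,2) i by blast
  qed
qed

definition blk :: "nat \<Rightarrow> nat \<Rightarrow> real set" where
  "blk n j = {real j / real n ..< (real j + 1) / real n}"

lemma mem_blk: "0 < n \<Longrightarrow> t \<in> blk n j \<longleftrightarrow> \<lfloor>t * real n\<rfloor> = int j"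
  by (auto simp: blk_def floor_eq_iff field_simps)

lemma blk_sub: "0 < n \<Longrightarrow> j < n \<Longrightarrow> blk n j \<subseteq> {0..1}"
proof
  fix t assume n: "0 < n" "j < n" and t: "t \<in> blk n j"
  have "real j + 1 \<le> real n" using n by simp
  then have "(real j + 1) / real n \<le> 1" using n by simp
  moreover have z: "0 \<le> real j / real n" by simp
  moreover have "real j / real n \<le> t" "t < (real j + 1) / real n" using t unfolding blk_def by auto
  ultimately have "0 \<le> t" "t \<le> 1" by linarith+
  then show "t \<in> {0..1}" by auto
qed

lemma blk_sets: "blk n j \<in> sets lebesgue"
  by (simp add: blk_def)

lemma blk_sets01: "0 < n \<Longrightarrow> j < n \<Longrightarrow> blk n j \<in> sets M01"
  by (rule sets01[OF blk_sub blk_sets])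

lemma ind_blk_meas: "indicator (blk n j) \<in> borel_measurable M01"
  by (rule measurable_restrict_space1, rule borel_measurable_indicator, rule blk_sets)

lemma blk_int: "0 < n \<Longrightarrow> j < n \<Longrightarrow> integral\<^sup>L M01 (indicator (blk n j)) = 1 / real n"
proof -
  assume n: "0 < n" "j < n"
  have "integral\<^sup>L M01 (indicator (blk n j)) = measure lebesgue (blk n j)"
    by (rule integral_ind01[OF blk_sub[OF n] blk_sets])
  also have "\<dots> = (real j + 1) / real n - real j / real n"
    using n by (simp add: blk_def divide_right_mono)
  also have "\<dots> = 1 / real n" by (simp add: diff_divide_distrib[symmetric])
  finally show ?thesis .
qed

lemma blk_prod:
  assumes "0 < n" "0 < N" "r < N"
  shows "indicator (blk n j0) t * indicator (blk (n*N) (j*N+r)) t =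
    (if j = j0 then indicator (blk (n*N) (j*N+r)) t else (0::real))"
proof (cases "t \<in> blk (n*N) (j*N+r)")
  case True
  have nN: "0 < n * N" using assms by simp
  have f1: "\<lfloor>t * real (n*N)\<rfloor> = int (j*N+r)" using True mem_blk[OF nN] by simp
  have "\<lfloor>t * real n\<rfloor> = \<lfloor>(t * real (n*N)) / real_of_int (int N)\<rfloor>"
    using assms by simp
  also have "\<dots> = \<lfloor>t * real (n*N)\<rfloor> div int N" by (rule floor_divide_real_eq_div) simp
  also have "\<dots> = int ((j*N+r) div N)" unfolding f1 by (simp only: zdiv_int)
  also have "\<dots> = int j" using assms by simp
  finally have "t \<in> blk n j0 \<longleftrightarrow> j = j0" using mem_blk[OF assms(1)] by simp
  then show ?thesis using True by (auto simp: indicator_def)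
qed (auto simp: indicator_def)

lemma sum_ind_unique:
  fixes v :: "'i \<Rightarrow> 'b::real_vector"
  assumes "finite I" "i0 \<in> I" "x \<in> S i0" "\<And>i. i \<in> I \<Longrightarrow> x \<in> S i \<Longrightarrow> i = i0"
  shows "(\<Sum>i\<in>I. indicator (S i) x *\<^sub>R v i) = v i0"
proof -
  have "(\<Sum>i\<in>I. indicator (S i) x *\<^sub>R v i) = indicator (S i0) x *\<^sub>R v i0 + (\<Sum>i\<in>I-{i0}. indicator (S i) x *\<^sub>R v i)"
    using assms(1,2) by (rule sum.remove)
  also have "(\<Sum>i\<in>I-{i0}. indicator (S i) x *\<^sub>R v i) = 0"
  proof (intro sum.neutral ballI)
    fix i assume "i \<in> I - {i0}"
    then have "x \<notin> S i" using assms(4) by auto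
    then show "indicator (S i) x *\<^sub>R v i = 0" by simp
  qed
  finally show ?thesis using assms(3) by simp
qed

lemma divmod_uniq:
  fixes j r j' r' N :: nat
  assumes "r < N" "r' < N" "j*N + r = j'*N + r'"
  shows "j = j' \<and> r = r'"
proof -
  have a: "(j*N + r) div N = j" "(j*N+r) mod N = r" using assms(1) by auto
  have b: "(j'*N + r') div N = j'" "(j'*N+r') mod N = r'" using assms(2) by auto
  have "j = j'" using a(1) b(1) assms(3) by metis
  moreover have "r = r'" using a(2) b(2) assms(3) by metis
  ultimately show ?thesis by blast
qed

definition Aavg :: "nat \<Rightarrow> (real \<Rightarrow> real^'n) \<Rightarrow> nat \<Rightarrow> real^'n" where
  "Aavg n f j = integral\<^sup>L M01 (\<lambda>t. indicator (blk n j) t *\<^sub>R f t)"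

definition vv :: "(nat \<Rightarrow> 'n::finite) \<Rightarrow> nat \<Rightarrow> (real \<Rightarrow> real^'n) \<Rightarrow> nat \<times> nat \<Rightarrow> real^'n" where
  "vv e n f q = (real CARD('n) * real n * (Aavg n f (fst q) $ e (snd q))) *\<^sub>R axis (e (snd q)) 1"

definition fkk :: "(nat \<Rightarrow> 'n::finite) \<Rightarrow> nat \<Rightarrow> (real \<Rightarrow> real^'n) \<Rightarrow> real \<Rightarrow> real^'n" where
  "fkk e n f t = (\<Sum>q\<in>{..<n}\<times>{..<CARD('n)}.
      indicator (blk (n*CARD('n)) (fst q * CARD('n) + snd q)) t *\<^sub>R vv e n f q)"

lemma fkk_meas: "fkk e n f \<in> borel_measurable M01"
  unfolding fkk_def
  by (intro borel_measurable_sum borel_measurable_scaleR ind_blk_meas borel_measurable_const)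

lemma fkk_disj:
  assumes "0 < n" "q \<in> {..<n}\<times>{..<CARD('n::finite)}" "q' \<in> {..<n}\<times>{..<CARD('n)}"
    "t \<in> blk (n*CARD('n)) (fst q * CARD('n) + snd q)" "t \<in> blk (n*CARD('n)) (fst q' * CARD('n) + snd q')"
  shows "q = q'"
proof -
  have P: "0 < n * CARD('n)" using assms(1) by simp
  have a: "\<lfloor>t * real (n*CARD('n))\<rfloor> = int (fst q * CARD('n) + snd q)"
    using assms(4) mem_blk[OF P] by blast
  have b: "\<lfloor>t * real (n*CARD('n))\<rfloor> = int (fst q' * CARD('n) + snd q')"
    using assms(5) mem_blk[OF P] by blast
  have "int (fst q * CARD('n) + snd q) = int (fst q' * CARD('n) + snd q')"
    using a b by (rule trans[OF sym])
  then have "fst q * CARD('n) + snd q = fst q' * CARD('n) + snd q'"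
    by (simp only: of_nat_eq_iff)
  then have "fst q = fst q' \<and> snd q = snd q'"
    using assms(2,3) by (intro divmod_uniq[of "snd q" "CARD('n)" "snd q'"]) auto
  then show ?thesis by (simp add: prod_eq_iff)
qed

lemma fkk_val:
  fixes e :: "nat \<Rightarrow> 'n::finite"
  assumes n: "0 < n" and m: "m < n * CARD('n)" and t: "\<lfloor>t * real (n*CARD('n))\<rfloor> = int m"
  shows "fkk e n f t = vv e n f (m div CARD('n), m mod CARD('n))"
  unfolding fkk_def
proof (rule sum_ind_unique[where S="\<lambda>q. blk (n*CARD('n)) (fst q * CARD('n) + snd q)" and v="vv e n f"])
  have P: "0 < n * CARD('n)" using n by simp
  show "finite ({..<n}\<times>{..<CARD('n)})" by simp
  have "m div CARD('n) < n" using m by (simp add: div_less_iff_less_mult)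
  then show i0: "(m div CARD('n), m mod CARD('n)) \<in> {..<n}\<times>{..<CARD('n)}" by simp
  have "m div CARD('n) * CARD('n) + m mod CARD('n) = m" by simp
  then show t0: "t \<in> blk (n * CARD('n)) (fst (m div CARD('n), m mod CARD('n)) * CARD('n) + snd (m div CARD('n), m mod CARD('n)))"
    using t mem_blk[OF P] by simp
  fix q assume "q \<in> {..<n}\<times>{..<CARD('n)}" "t \<in> blk (n * CARD('n)) (fst q * CARD('n) + snd q)"
  then show "q = (m div CARD('n), m mod CARD('n))"
    using fkk_disj[OF n _ i0 _ t0] by blast
qed

lemma fkk_cases:
  fixes e :: "nat \<Rightarrow> 'n::finite"
  assumes n: "0 < n"
  shows "fkk e n f t = 0 \<or> (\<exists>q\<in>{..<n}\<times>{..<CARD('n)}. fkk e n f t = vv e n f q)"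
proof (cases "\<exists>q\<in>{..<n}\<times>{..<CARD('n)}. t \<in> blk (n*CARD('n)) (fst q * CARD('n) + snd q)")
  case True
  then obtain q where q: "q \<in> {..<n}\<times>{..<CARD('n)}" "t \<in> blk (n*CARD('n)) (fst q * CARD('n) + snd q)"
    by blast
  have "fkk e n f t = vv e n f q"
    unfolding fkk_def
    by (rule sum_ind_unique[where S="\<lambda>q. blk (n*CARD('n)) (fst q * CARD('n) + snd q)" and v="vv e n f", OF _ q]) (use fkk_disj[OF n _ q(1) _ q(2)] in auto)
  then show ?thesis using q by blast
next
  case False
  then have "fkk e n f t = 0" unfolding fkk_def by (intro sum.neutral) auto
  then show ?thesis by simp
qed

lemma f_integrable:
  fixes f :: "real \<Rightarrow> real^'n"
  assumes "f \<in> borel_measurable M01" "AE t in M01. norm (f t) \<le> M"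
  shows "integrable M01 f"
  by (rule finite_measure.integrable_const_bound[OF fm01 assms(2) assms(1)])

lemma Aavg_bound:
  fixes f :: "real \<Rightarrow> real^'n"
  assumes fm: "f \<in> borel_measurable M01" and fb: "AE t in M01. norm (f t) \<le> M"
    and n: "0 < n" "j < n"
  shows "\<bar>Aavg n f j $ i\<bar> \<le> M / real n"
proof -
  have fi: "integrable M01 f" by (rule f_integrable[OF fm fb])
  have "\<bar>Aavg n f j $ i\<bar> \<le> norm (Aavg n f j)" by (rule component_le_norm_cart)
  also have "\<dots> \<le> integral\<^sup>L M01 (\<lambda>t. norm (indicator (blk n j) t *\<^sub>R f t))"
    unfolding Aavg_def by (rule integral_norm_bound)
  also have "\<dots> \<le> integral\<^sup>L M01 (\<lambda>t. M * indicator (blk n j) t)"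
  proof (rule integral_mono_AE)
    show "integrable M01 (\<lambda>t. norm (indicator (blk n j) t *\<^sub>R f t))"
      using fi by (intro integrable_norm integrable_mult_indicator blk_sets01 n)
    show "integrable M01 (\<lambda>t. M * indicator (blk n j) t)"
      by (intro integrable_mult_right finite_measure.integrable_const_bound[OF fm01, where B=1])
         (auto simp: ind_blk_meas)
    show "AE t in M01. norm (indicator (blk n j) t *\<^sub>R f t) \<le> M * indicator (blk n j) t"
      using fb by eventually_elim (auto simp: indicator_def)
  qed
  also have "\<dots> = M / real n" using blk_int[OF n] by simp
  finally show ?thesis .
qed

lemma vv_norm:
  fixes e :: "nat \<Rightarrow> 'n::finite"
  assumes fm: "f \<in> borel_measurable M01" and fb: "AE t in M01. norm (f t) \<le> M"
    and n: "0 < n" and q: "q \<in> {..<n}\<times>{..<CARD('n::finite)}"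
  shows "norm (vv e n f q) \<le> real CARD('n) * M"
proof -
  have j: "fst q < n" using q by auto
  have "norm (vv e n f q) = real CARD('n) * real n * \<bar>Aavg n f (fst q) $ e (snd q)\<bar>"
    unfolding vv_def by (simp add: abs_mult)
  also have "\<dots> \<le> real CARD('n) * real n * (M / real n)"
    by (intro mult_left_mono Aavg_bound[OF fm fb n j]) auto
  also have "\<dots> = real CARD('n) * M" using n by simp
  finally show ?thesis .
qed

lemma fkk_bound:
  fixes e :: "nat \<Rightarrow> 'n::finite"
  assumes fm: "f \<in> borel_measurable M01" and fb: "AE t in M01. norm (f t) \<le> M"
    and n: "0 < n" and M: "0 \<le> M"
  shows "norm (fkk e n f t) \<le> real CARD('n) * M"
  using fkk_cases[OF n, of e f t] vv_norm[OF fm fb n] M by auto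

lemma fkk_block:
  fixes e :: "nat \<Rightarrow> 'n::finite" and f :: "real \<Rightarrow> real^'n"
  assumes e: "bij_betw e {..<CARD('n)} UNIV"
    and fm: "f \<in> borel_measurable M01" and fb: "AE t in M01. norm (f t) \<le> M"
    and n: "0 < n" and j0: "j0 < n"
  shows "integral\<^sup>L M01 (\<lambda>t. (fkk e n f t - f t) \<bullet> (indicator (blk n j0) t *\<^sub>R w)) = 0"
proof -
  define N where "N = CARD('n)"
  define J where "J = (\<lambda>r. blk (n * N) (j0 * N + r))"
  define c where "c = (\<lambda>r. vv e n f (j0, r) \<bullet> w)"
  have N: "0 < N" by (simp add: N_def)
  have pw: "fkk e n f t \<bullet> (indicator (blk n j0) t *\<^sub>R w) = (\<Sum>r<N. indicator (J r) t * c r)" for t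
  proof -
    have "fkk e n f t \<bullet> (indicator (blk n j0) t *\<^sub>R w) =
        (\<Sum>q\<in>{..<n}\<times>{..<N}. (indicator (blk n j0) t * indicator (blk (n*N) (fst q * N + snd q)) t) * (vv e n f q \<bullet> w))"
      unfolding fkk_def N_def inner_sum_left
      by (intro sum.cong refl) (simp only: inner_scaleR_left inner_scaleR_right mult_ac)
    also have "\<dots> = (\<Sum>q\<in>{..<n}\<times>{..<N}. (if fst q = j0 then indicator (blk (n*N) (fst q * N + snd q)) t * (vv e n f q \<bullet> w) else 0))"
    proof (intro sum.cong refl)
      fix q assume "q \<in> {..<n}\<times>{..<N}"
      then have "snd q < N" by auto
      then show "(indicator (blk n j0) t * indicator (blk (n*N) (fst q * N + snd q)) t) * (vv e n f q \<bullet> w) =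
          (if fst q = j0 then indicator (blk (n*N) (fst q * N + snd q)) t * (vv e n f q \<bullet> w) else 0)"
        using blk_prod[OF n N, of "snd q" j0 t "fst q"] by auto
    qed
    also have "\<dots> = (\<Sum>j<n. \<Sum>r<N. (if j = j0 then indicator (blk (n*N) (j * N + r)) t * (vv e n f (j, r) \<bullet> w) else 0))"
      by (simp add: sum.cartesian_product split_beta) (intro sum.cong refl, auto)
    also have "\<dots> = (\<Sum>j<n. if j = j0 then (\<Sum>r<N. indicator (blk (n*N) (j * N + r)) t * (vv e n f (j, r) \<bullet> w)) else 0)"
      by (intro sum.cong refl) auto
    also have "\<dots> = (\<Sum>r<N. indicator (J r) t * c r)"
      using j0 by (simp add: J_def c_def)
    finally show ?thesis .
  qed
  have Jint: "integral\<^sup>L M01 (indicator (J r)) = 1 / real (n * N)" if "r < N" for r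
  proof -
    have "j0 * N + r < n * N"
    proof -
      have "j0 * N + r < j0 * N + N" using that by simp
      also have "\<dots> = (j0 + 1) * N" by simp
      also have "\<dots> \<le> n * N" using j0 by (intro mult_right_mono) auto
      finally show ?thesis .
    qed
    then show ?thesis unfolding J_def using n N by (intro blk_int) auto
  qed
  have Jii: "integrable M01 (indicator (J r) :: real \<Rightarrow> real)" for r
    by (rule finite_measure.integrable_const_bound[OF fm01, where B=1]) (auto simp: J_def ind_blk_meas)
  have i1: "integrable M01 (\<lambda>t. fkk e n f t \<bullet> (indicator (blk n j0) t *\<^sub>R w))"
    unfolding pw using Jii by (intro Bochner_Integration.integrable_sum Bochner_Integration.integrable_mult_left) auto
  have fi: "integrable M01 f" by (rule f_integrable[OF fm fb])
  have fBi: "integrable M01 (\<lambda>t. indicator (blk n j0) t *\<^sub>R f t)"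
    by (rule integrable_mult_indicator[OF blk_sets01[OF n j0] fi])
  have i2: "integrable M01 (\<lambda>t. f t \<bullet> (indicator (blk n j0) t *\<^sub>R w))"
  proof -
    have "(\<lambda>t. f t \<bullet> (indicator (blk n j0) t *\<^sub>R w)) = (\<lambda>t. (indicator (blk n j0) t *\<^sub>R f t) \<bullet> w)"
      by (auto simp: inner_scaleR_left inner_scaleR_right)
    moreover have "integrable M01 (\<lambda>t. (indicator (blk n j0) t *\<^sub>R f t) \<bullet> w)"
      by (rule integrable_inner_left) (rule fBi)
    ultimately show ?thesis by simp
  qed
  have I1: "integral\<^sup>L M01 (\<lambda>t. fkk e n f t \<bullet> (indicator (blk n j0) t *\<^sub>R w)) = (\<Sum>r<N. c r / real (n * N))"
  proof -
    have "integral\<^sup>L M01 (\<lambda>t. fkk e n f t \<bullet> (indicator (blk n j0) t *\<^sub>R w)) =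
        integral\<^sup>L M01 (\<lambda>t. \<Sum>r<N. indicator (J r) t * c r)" unfolding pw ..
    also have "\<dots> = (\<Sum>r<N. integral\<^sup>L M01 (\<lambda>t. indicator (J r) t * c r))"
      using Jii by (intro Bochner_Integration.integral_sum Bochner_Integration.integrable_mult_left) auto
    also have "\<dots> = (\<Sum>r<N. c r / real (n * N))"
      using Jint by (intro sum.cong refl) (simp add: integral_mult_left_zero)
    finally show ?thesis .
  qed
  have cr: "c r / real (n * N) = Aavg n f j0 $ e r * w $ e r" for r
    using n N by (simp add: c_def vv_def inner_axis' N_def)
  have I1': "integral\<^sup>L M01 (\<lambda>t. fkk e n f t \<bullet> (indicator (blk n j0) t *\<^sub>R w)) = Aavg n f j0 \<bullet> w"
  proof -
    have "(\<Sum>r<N. c r / real (n * N)) = (\<Sum>r<N. Aavg n f j0 $ e r * w $ e r)" using cr by simp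
    also have "\<dots> = (\<Sum>i\<in>UNIV. Aavg n f j0 $ i * w $ i)"
      using e unfolding N_def by (rule sum.reindex_bij_betw)
    also have "\<dots> = Aavg n f j0 \<bullet> w" by (simp add: inner_vec_def)
    finally show ?thesis using I1 by simp
  qed
  have I2: "integral\<^sup>L M01 (\<lambda>t. f t \<bullet> (indicator (blk n j0) t *\<^sub>R w)) = Aavg n f j0 \<bullet> w"
  proof -
    have "(\<lambda>t. f t \<bullet> (indicator (blk n j0) t *\<^sub>R w)) = (\<lambda>t. (indicator (blk n j0) t *\<^sub>R f t) \<bullet> w)"
      by (auto simp: inner_scaleR_left inner_scaleR_right)
    moreover have "integral\<^sup>L M01 (\<lambda>t. (indicator (blk n j0) t *\<^sub>R f t) \<bullet> w) = Aavg n f j0 \<bullet> w"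
      unfolding Aavg_def by (rule integral_inner_left) (rule fBi)
    ultimately show ?thesis by simp
  qed
  have "integral\<^sup>L M01 (\<lambda>t. (fkk e n f t - f t) \<bullet> (indicator (blk n j0) t *\<^sub>R w)) =
      integral\<^sup>L M01 (\<lambda>t. fkk e n f t \<bullet> (indicator (blk n j0) t *\<^sub>R w) - f t \<bullet> (indicator (blk n j0) t *\<^sub>R w))"
    by (simp add: inner_diff_left right_diff_distrib)
  also have "\<dots> = integral\<^sup>L M01 (\<lambda>t. fkk e n f t \<bullet> (indicator (blk n j0) t *\<^sub>R w)) -
      integral\<^sup>L M01 (\<lambda>t. f t \<bullet> (indicator (blk n j0) t *\<^sub>R w))"
    by (rule Bochner_Integration.integral_diff[OF i1 i2])
  also have "\<dots> = 0" using I1' I2 by simp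
  finally show ?thesis .
qed

lemma AE_ne1: "AE t in M01. t \<noteq> 1"
proof (rule AE_I'[of "{1}"])
  show "{1} \<in> null_sets M01" by (auto simp: null_sets_restrict_space)
qed auto

lemma measure01: "measure M01 (space M01) = 1"
  by (simp add: measure_restrict_space)

lemma cont_case:
  fixes e :: "nat \<Rightarrow> 'n::finite" and f g :: "real \<Rightarrow> real^'n"
  assumes e: "bij_betw e {..<CARD('n)} UNIV"
    and fm: "f \<in> borel_measurable M01" and fb: "AE t in M01. norm (f t) \<le> M"
    and M: "0 \<le> M" and g: "continuous_on UNIV g"
  shows "(\<lambda>k. integral\<^sup>L M01 (\<lambda>t. (fkk e (Suc k) f t - f t) \<bullet> g t)) \<longlonglongrightarrow> 0"
proof (rule LIMSEQ_I)
  fix \<epsilon> :: real assume \<epsilon>: "0 < \<epsilon>"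
  define K where "K = real CARD('n) * M + M + 1"
  have K: "K > 0" unfolding K_def using M by (simp add: add_nonneg_pos)
  have Dm: "(\<lambda>t. fkk e n f t - f t) \<in> borel_measurable M01" for n
    using fkk_meas fm by (intro borel_measurable_diff) auto
  have Db: "AE t in M01. norm (fkk e (Suc k) f t - f t) \<le> K" for k
    using fb
  proof eventually_elim
    case (elim t)
    have "norm (fkk e (Suc k) f t - f t) \<le> norm (fkk e (Suc k) f t) + norm (f t)"
      by (rule norm_triangle_ineq4)
    also have "\<dots> \<le> real CARD('n) * M + M"
      using fkk_bound[OF fm fb _ M, of "Suc k" e t] elim by simp
    finally show ?case unfolding K_def by simp
  qed
  define \<omega> where "\<omega> = \<epsilon> / (2 * K)"
  have \<omega>: "\<omega> > 0" unfolding \<omega>_def using \<epsilon> K by simp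
  have uc: "uniformly_continuous_on {0..1} g"
    by (rule compact_uniformly_continuous) (auto intro: continuous_on_subset[OF g])
  obtain d where d: "d > 0" "\<And>x x'. x \<in> {0..1} \<Longrightarrow> x' \<in> {0..1} \<Longrightarrow> dist x' x < d \<Longrightarrow> dist (g x') (g x) < \<omega>"
    using uc \<omega> unfolding uniformly_continuous_on_def by metis
  obtain N0 :: nat where N0: "1 / d < real N0" using reals_Archimedean2 by blast
  show "\<exists>no. \<forall>k\<ge>no. norm (integral\<^sup>L M01 (\<lambda>t. (fkk e (Suc k) f t - f t) \<bullet> g t) - 0) < \<epsilon>"
  proof (intro exI allI impI)
    fix k assume k: "N0 \<le> k"
    define n where "n = Suc k"
    have n: "0 < n" by (simp add: n_def)
    have nd: "1 / real n < d"
    proof -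
      have "1 / d < real n" using N0 k unfolding n_def by linarith
      then show ?thesis using d(1) n by (simp add: field_simps)
    qed
    define D where "D = (\<lambda>t. fkk e n f t - f t)"
    have Dm': "D \<in> borel_measurable M01" unfolding D_def by (rule Dm)
    have Db': "AE t in M01. norm (D t) \<le> K" unfolding D_def n_def by (rule Db)
    define gn where "gn = (\<lambda>t. \<Sum>j<n. indicator (blk n j) t *\<^sub>R g (real j / real n))"
    have indi: "integrable M01 (\<lambda>t. indicator (blk n j) t *\<^sub>R c)" if "j < n" for j and c :: "real^'n"
      by (intro integrable_mult_indicator blk_sets01 n that finite_measure.integrable_const[OF fm01])
    have gni: "integrable M01 gn" unfolding gn_def
      by (intro Bochner_Integration.integrable_sum indi) auto
    have gi: "integrable M01 g" by (rule cont_integrable[OF g])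
    have zero: "integral\<^sup>L M01 (\<lambda>t. D t \<bullet> gn t) = 0"
    proof -
      have "integral\<^sup>L M01 (\<lambda>t. D t \<bullet> gn t) =
          integral\<^sup>L M01 (\<lambda>t. \<Sum>j<n. D t \<bullet> (indicator (blk n j) t *\<^sub>R g (real j / real n)))"
        unfolding gn_def by (simp only: inner_sum_right)
      also have "\<dots> = (\<Sum>j<n. integral\<^sup>L M01 (\<lambda>t. D t \<bullet> (indicator (blk n j) t *\<^sub>R g (real j / real n))))"
        by (intro Bochner_Integration.integral_sum int_bdd_prod[OF Dm' Db'] indi) auto
      also have "\<dots> = 0"
        unfolding D_def using fkk_block[OF e fm fb n] by simp
      finally show ?thesis .
    qed
    have close: "AE t in M01. norm (g t - gn t) \<le> \<omega>"
      using AE_ne1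
    proof (rule AE_mp, intro AE_I2 impI)
      fix t assume t: "t \<in> space M01" "t \<noteq> 1"
      then have t01: "0 \<le> t" "t < 1" by auto
      define m where "m = nat \<lfloor>t * real n\<rfloor>"
      have fl0: "0 \<le> \<lfloor>t * real n\<rfloor>" using t01 by simp
      have flm: "\<lfloor>t * real n\<rfloor> = int m" unfolding m_def using fl0 by simp
      have "t * real n < real n" using t01 n by simp
      then have "\<lfloor>t * real n\<rfloor> < int n" by linarith
      then have mn: "m < n" using flm by linarith
      have tm: "t \<in> blk n m" using mem_blk[OF n] flm by simp
      have gnt: "gn t = g (real m / real n)"
        unfolding gn_def
      proof (rule sum_ind_unique[where S="blk n" and v="\<lambda>j. g (real j / real n)"])
        show "finite {..<n}" by simp
        show "m \<in> {..<n}" using mn by simp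
        show "t \<in> blk n m" by (rule tm)
        fix j assume "j \<in> {..<n}" "t \<in> blk n j"
        then show "j = m" using mem_blk[OF n] flm by auto
      qed
      have m01: "real m / real n \<in> {0..1}" using mn n by simp
      have "dist t (real m / real n) < d"
      proof -
        have "real m / real n \<le> t" "t < (real m + 1) / real n" using tm by (auto simp: blk_def)
        then have "\<bar>t - real m / real n\<bar> < 1 / real n" by (simp add: add_divide_distrib)
        then show ?thesis using nd by (simp add: dist_real_def)
      qed
      then have "dist (g t) (g (real m / real n)) < \<omega>"
        using d(2)[OF m01, of t] t01 by simp
      then show "norm (g t - gn t) \<le> \<omega>" unfolding gnt by (simp add: dist_norm)
    qed
    have ggn: "integrable M01 (\<lambda>t. g t - gn t)" using gi gni by auto
    have split: "integral\<^sup>L M01 (\<lambda>t. D t \<bullet> g t) =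
        integral\<^sup>L M01 (\<lambda>t. D t \<bullet> gn t) + integral\<^sup>L M01 (\<lambda>t. D t \<bullet> (g t - gn t))"
    proof -
      have "integral\<^sup>L M01 (\<lambda>t. D t \<bullet> gn t) + integral\<^sup>L M01 (\<lambda>t. D t \<bullet> (g t - gn t))
          = integral\<^sup>L M01 (\<lambda>t. D t \<bullet> gn t + D t \<bullet> (g t - gn t))"
        by (rule Bochner_Integration.integral_add[symmetric])
           (auto intro: int_bdd_prod[OF Dm' Db'] gni ggn)
      also have "(\<lambda>t. D t \<bullet> gn t + D t \<bullet> (g t - gn t)) = (\<lambda>t. D t \<bullet> g t)"
        by (auto simp: inner_diff_right)
      finally show ?thesis by simp
    qed
    have "\<bar>integral\<^sup>L M01 (\<lambda>t. D t \<bullet> (g t - gn t))\<bar> \<le> K * integral\<^sup>L M01 (\<lambda>t. norm (g t - gn t))"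
      by (rule int_bdd_est[OF Dm' Db' ggn])
    also have "\<dots> \<le> K * integral\<^sup>L M01 (\<lambda>t. \<omega>)"
    proof (intro mult_left_mono integral_mono_AE)
      show "integrable M01 (\<lambda>t. norm (g t - gn t))" using ggn by auto
      show "integrable M01 (\<lambda>t. \<omega>)" by (rule finite_measure.integrable_const[OF fm01])
    qed (use close K in auto)
    also have "\<dots> = K * \<omega>" using measure01 by simp
    also have "\<dots> = \<epsilon> / 2" unfolding \<omega>_def using K by simp
    also have "\<dots> < \<epsilon>" using \<epsilon> by simp
    finally have "\<bar>integral\<^sup>L M01 (\<lambda>t. D t \<bullet> g t)\<bar> < \<epsilon>" unfolding split zero by simp
    then show "norm (integral\<^sup>L M01 (\<lambda>t. (fkk e (Suc k) f t - f t) \<bullet> g t) - 0) < \<epsilon>"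
      unfolding D_def n_def by simp
  qed
qed

theorem propositionA1:
  "\<exists>C>0. \<forall>f::real \<Rightarrow> real ^ 'n. f \<in> Linf \<longrightarrow>
     (\<exists>fk::nat \<Rightarrow> real \<Rightarrow> real ^ 'n.
        (\<forall>k. fk k \<in> F_N 0 1) \<and>
        (\<forall>h\<in>L1. (\<lambda>k. integral\<^sup>L (lebesgue_on {0..1}) (\<lambda>t. fk k t \<bullet> h t))
                    \<longlonglongrightarrow> integral\<^sup>L (lebesgue_on {0..1}) (\<lambda>t. f t \<bullet> h t)) \<and>
        (\<forall>k. Linf_norm (fk k) \<le> ereal C * Linf_norm f))"
proof -
  define N where "N = CARD('n)"
  have N: "0 < N" by (simp add: N_def)
  obtain e :: "nat \<Rightarrow> 'n" where e: "bij_betw e {..<N} UNIV"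
    using ex_bij_betw_nat_finite[of "UNIV :: 'n set"] by (auto simp: N_def lessThan_atLeast0)
  show ?thesis
  proof (rule exI[of _ "real N"], intro conjI allI impI)
    show "(0::real) < real N" using N by simp
    fix f :: "real \<Rightarrow> real^'n" assume "f \<in> Linf"
    then have fm: "f \<in> borel_measurable M01" and lin: "Linf_norm f < \<infinity>"
      by (auto simp: Linf_def)
    have sp: "emeasure M01 (space M01) \<noteq> 0"
    proof
      assume "emeasure M01 (space M01) = 0"
      then have "measure M01 (space M01) = 0" by (simp add: measure_def)
      then show False using measure01 by simp
    qed
    have "ereal 0 = esssup M01 (\<lambda>t. ereal 0)" by (rule esssup_const[OF sp, symmetric])
    also have "\<dots> \<le> Linf_norm f" unfolding Linf_norm_def
      by (rule esssup_mono) auto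
    finally have l0: "0 \<le> Linf_norm f" by (simp add: zero_ereal_def)
    define M where "M = real_of_ereal (Linf_norm f)"
    have LM: "Linf_norm f = ereal M" unfolding M_def using l0 lin by (cases "Linf_norm f") auto
    have M: "0 \<le> M" using l0 LM by simp
    have fb: "AE t in M01. norm (f t) \<le> M"
      using esssup_AE[of "\<lambda>t. ereal (norm (f t))" M01]
      unfolding Linf_norm_def[symmetric] LM by simp
    define fk where "fk = (\<lambda>k. fkk e (Suc k) f)"
    have eN: "bij_betw e {..<CARD('n)} UNIV" using e by (simp add: N_def)
    show "\<exists>fk::nat \<Rightarrow> real \<Rightarrow> real ^ 'n.
        (\<forall>k. fk k \<in> F_N 0 1) \<and>
        (\<forall>h\<in>L1. (\<lambda>k. integral\<^sup>L (lebesgue_on {0..1}) (\<lambda>t. fk k t \<bullet> h t))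
                    \<longlonglongrightarrow> integral\<^sup>L (lebesgue_on {0..1}) (\<lambda>t. f t \<bullet> h t)) \<and>
        (\<forall>k. Linf_norm (fk k) \<le> ereal (real N) * Linf_norm f)"
    proof -
      have G1: "fk k \<in> F_N 0 1" for k
      proof -
      define n where "n = Suc k"
      define P where "P = n * N"
      have n: "0 < n" by (simp add: n_def)
      have P: "0 < P" using n N by (simp add: P_def)
      define I where "I = (\<lambda>l. e ((l - 1) mod N))"
      define Cf where "Cf = (\<lambda>l. real N * real n * (Aavg n f ((l-1) div N) $ e ((l-1) mod N)))"
      define T where "T = (\<lambda>l::nat. real l / real P)"
      have c4: "\<forall>l<P. T l < T (Suc l)" using P by (simp add: T_def divide_strict_right_mono)
      have c5: "\<forall>l\<in>{1..P}. \<forall>s\<in>{T (l - 1)<..<T l}. fk k s = Cf l *\<^sub>R axis (I l) 1"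
      proof (intro ballI)
        fix l s assume l: "l \<in> {1..P}" and s: "s \<in> {T (l - 1)<..<T l}"
        define m where "m = l - 1"
        have ml: "real m + 1 = real l" "m < P" using l by (auto simp: m_def)
        have "real m < s * real P" "s * real P < real l"
          using s P by (auto simp: m_def T_def field_simps)
        then have fl: "\<lfloor>s * real (n * CARD('n))\<rfloor> = int m"
          using ml by (simp add: floor_eq_iff P_def N_def)
        have "fk k s = vv e n f (m div CARD('n), m mod CARD('n))"
          unfolding fk_def n_def[symmetric]
          by (rule fkk_val[OF n _ fl]) (use ml in \<open>simp add: P_def N_def\<close>)
        then show "fk k s = Cf l *\<^sub>R axis (I l) 1"
          by (simp add: vv_def m_def N_def Cf_def I_def)
      qed
      have c123: "1 \<le> P" "T 0 = 0" "T P = 1" using P by (auto simp: T_def)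
      show "fk k \<in> F_N 0 1"
        unfolding F_N_def mem_Collect_eq
        using c123 c4 c5 by blast
      qed
      have G3: "Linf_norm (fk k) \<le> ereal (real N) * Linf_norm f" for k
      proof -
      have "Linf_norm (fk k) \<le> ereal (real N * M)"
        unfolding Linf_norm_def
      proof (rule esssup_I)
        show "(\<lambda>t. ereal (norm (fk k t))) \<in> borel_measurable M01"
          unfolding fk_def using fkk_meas by measurable
        show "AE t in M01. ereal (norm (fk k t)) \<le> ereal (real N * M)"
          unfolding fk_def N_def using fkk_bound[OF fm fb _ M] by (intro AE_I2) auto
      qed
      then show "Linf_norm (fk k) \<le> ereal (real N) * Linf_norm f" unfolding LM by simp
      qed
      have G2: "(\<lambda>k. integral\<^sup>L (lebesgue_on {0..1}) (\<lambda>t. fk k t \<bullet> h t))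
                    \<longlonglongrightarrow> integral\<^sup>L (lebesgue_on {0..1}) (\<lambda>t. f t \<bullet> h t)" if "h \<in> L1" for h
      proof -
      from that have hi: "integrable M01 h" by (simp add: L1_def)
      define K where "K = real N * M + M"
      have Dm: "(\<lambda>t. fk k t - f t) \<in> borel_measurable M01" for k
        unfolding fk_def using fkk_meas fm by (intro borel_measurable_diff) auto
      have Db: "AE t in M01. norm (fk k t - f t) \<le> K" for k
        using fb
      proof eventually_elim
        case (elim t)
        have "norm (fk k t - f t) \<le> norm (fk k t) + norm (f t)" by (rule norm_triangle_ineq4)
        also have "\<dots> \<le> real N * M + M"
          using fkk_bound[OF fm fb _ M, of "Suc k" e t] elim unfolding fk_def N_def by simp
        finally show ?case unfolding K_def by simp
      qed
      have lim0: "(\<lambda>k. integral\<^sup>L M01 (\<lambda>t. (fk k t - f t) \<bullet> h t)) \<longlonglongrightarrow> 0"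
      proof (rule extend_weak[OF Dm Db _ hi])
        fix g :: "real \<Rightarrow> real^'n" assume "continuous_on UNIV g"
        then show "(\<lambda>k. integral\<^sup>L M01 (\<lambda>t. (fk k t - f t) \<bullet> g t)) \<longlonglongrightarrow> 0"
          unfolding fk_def by (rule cont_case[OF eN fm fb M])
      qed
      have fhi: "integrable M01 (\<lambda>t. f t \<bullet> h t)"
        by (rule int_bdd_prod[OF fm fb hi])
      have eq: "integral\<^sup>L M01 (\<lambda>t. fk k t \<bullet> h t) =
          integral\<^sup>L M01 (\<lambda>t. (fk k t - f t) \<bullet> h t) + integral\<^sup>L M01 (\<lambda>t. f t \<bullet> h t)" for k
      proof -
        have "integral\<^sup>L M01 (\<lambda>t. (fk k t - f t) \<bullet> h t) + integral\<^sup>L M01 (\<lambda>t. f t \<bullet> h t)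
            = integral\<^sup>L M01 (\<lambda>t. (fk k t - f t) \<bullet> h t + f t \<bullet> h t)"
          by (rule Bochner_Integration.integral_add[symmetric]) (auto intro: int_bdd_prod[OF Dm Db hi] fhi)
        also have "(\<lambda>t. (fk k t - f t) \<bullet> h t + f t \<bullet> h t) = (\<lambda>t. fk k t \<bullet> h t)"
          by (auto simp: inner_diff_left)
        finally show ?thesis by simp
      qed
      show "(\<lambda>k. integral\<^sup>L (lebesgue_on {0..1}) (\<lambda>t. fk k t \<bullet> h t))
                    \<longlonglongrightarrow> integral\<^sup>L (lebesgue_on {0..1}) (\<lambda>t. f t \<bullet> h t)"
        unfolding eq using tendsto_add[OF lim0 tendsto_const[of "integral\<^sup>L M01 (\<lambda>t. f t \<bullet> h t)"]]
        by simp
      qed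
      show ?thesis using G1 G2 G3 by blast
    qed
  qed
qed

end
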